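(* Let $X$ be an arbitrary set, let $\mathcal{P}=\{X_i \mid i\in I\}$ be a partition of $X$, and let $f\in T(X,\mathcal{P})$. Then the following statements are equivalent: (i) $f\in \Sigma(X,\mathcal{P})$; (ii) the character $\chi^{(f)}\colon I\to I$ is surjective; (iii) $f\in S_{\mathcal{P}}(X)$ and $Af^{-1}\neq\emptyset$ for every nonempty open set $A\subseteq X$ (open with respect to the topology on $X$ having $\mathcal{P}$ as a basis).
   Context: Maps are written on the right: $xf$ is the image of $x$, and $Af=\{af\mid a\in A\}$, $Af^{-1}=\{x\in X\mid xf\in A\}$. $\mathcal{T}_X$ is the semigroup of all maps $X\to X$. For a partition $\mathcal{P}=\{X_i\mid i\in I\}$ of $X$ (distinct indices correspond to distinct blocks), $T(X,\mathcal{P})=\{f\in\mathcal{T}_X \mid \forall i\in I\ \exists j\in I:\ X_if\subseteq X_j\}$ and $\Sigma(X,\mathcal{P})=\{f\in T(X,\mathcal{P})\mid Xf\cap X_i\neq\emptyset \text{ for all } i\in I\}$. For $f\in T(X,\mathcal{P})$, the character of $f$ is the map $\chi^{(f)}\colon I\to I$ defined by $i\chi^{(f)}=j$ whenever $X_if\subseteq X_j$. The topology on $X$ having $\mathcal{P}$ as a basis is the one whose open sets are exactly the unions of blocks of $\mathcal{P}$; $S_{\mathcal{P}}(X)$ denotes the set of all continuous maps $X\to X$ for this topology. *)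

theory Defs
  imports "HOL-Analysis.Analysis"
begin

definition is_partition :: "'a set \<Rightarrow> 'i set \<Rightarrow> ('i \<Rightarrow> 'a set) \<Rightarrow> bool" where
  "is_partition X I P \<longleftrightarrow>
     (\<forall>i\<in>I. P i \<noteq> {}) \<and>
     (\<forall>i\<in>I. \<forall>j\<in>I. i \<noteq> j \<longrightarrow> P i \<inter> P j = {}) \<and>
     \<Union>(P ` I) = X"

definition TXP :: "'a set \<Rightarrow> 'i set \<Rightarrow> ('i \<Rightarrow> 'a set) \<Rightarrow> ('a \<Rightarrow> 'a) set" where
  "TXP X I P = {f. f \<in> X \<rightarrow> X \<and> (\<forall>i\<in>I. \<exists>j\<in>I. f ` P i \<subseteq> P j)}"

definition SigmaXP :: "'a set \<Rightarrow> 'i set \<Rightarrow> ('i \<Rightarrow> 'a set) \<Rightarrow> ('a \<Rightarrow> 'a) set" where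
  "SigmaXP X I P = {f \<in> TXP X I P. \<forall>i\<in>I. f ` X \<inter> P i \<noteq> {}}"

definition character :: "'i set \<Rightarrow> ('i \<Rightarrow> 'a set) \<Rightarrow> ('a \<Rightarrow> 'a) \<Rightarrow> 'i \<Rightarrow> 'i" where
  "character I P f i = (THE j. j \<in> I \<and> f ` P i \<subseteq> P j)"

definition part_topology :: "'i set \<Rightarrow> ('i \<Rightarrow> 'a set) \<Rightarrow> 'a topology" where
  "part_topology I P = topology_generated_by (P ` I)"

end

theory Submission
  imports Defs
begin

lemma open_saturated:
  assumes part: "is_partition X I P"
    and op: "openin (part_topology I P) U"
  shows "U \<subseteq> X \<and> (\<forall>j\<in>I. P j \<inter> U \<noteq> {} \<longrightarrow> P j \<subseteq> U)"
proof -
  have g: "generate_topology_on (P ` I) U"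
    using op unfolding part_topology_def by (simp add: openin_topology_generated_by_iff)
  from g show ?thesis
  proof (induction rule: generate_topology_on.induct)
    case Empty then show ?case by simp
  next
    case (Int a b)
    have "\<And>j. j\<in>I \<Longrightarrow> P j \<inter> (a \<inter> b) \<noteq> {} \<Longrightarrow> P j \<subseteq> a \<inter> b"
    proof -
      fix j assume j: "j \<in> I" "P j \<inter> (a \<inter> b) \<noteq> {}"
      then have "P j \<inter> a \<noteq> {}" "P j \<inter> b \<noteq> {}" by auto
      then show "P j \<subseteq> a \<inter> b" using Int.IH j(1) by auto
    qed
    then show ?case using Int.IH by auto
  next
    case (UN K)
    have "\<And>j. j\<in>I \<Longrightarrow> P j \<inter> \<Union>K \<noteq> {} \<Longrightarrow> P j \<subseteq> \<Union>K"
    proof -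
      fix j assume j: "j \<in> I" "P j \<inter> \<Union>K \<noteq> {}"
      then obtain k where k: "k \<in> K" "P j \<inter> k \<noteq> {}" by auto
      then have "P j \<subseteq> k" using UN.IH j(1) by auto
      then show "P j \<subseteq> \<Union>K" using k by auto
    qed
    then show ?case using UN.IH by auto
  next
    case (Basis s)
    then obtain i where i: "i \<in> I" "s = P i" by auto
    have "P i \<subseteq> X" using part i unfolding is_partition_def by auto
    moreover have "\<And>j. j\<in>I \<Longrightarrow> P j \<inter> P i \<noteq> {} \<Longrightarrow> P j \<subseteq> P i"
      using part i unfolding is_partition_def by (metis equalityE)
    ultimately show ?case using i by auto
  qed
qed

theorem theorem3p2:
  fixes X :: "'a set" and I :: "'i set" and P :: "'i \<Rightarrow> 'a set" and f :: "'a \<Rightarrow> 'a"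
  assumes "is_partition X I P"
    and "f \<in> TXP X I P"
  shows "(f \<in> SigmaXP X I P \<longleftrightarrow> character I P f ` I = I)
       \<and> (character I P f ` I = I \<longleftrightarrow>
            (continuous_map (part_topology I P) (part_topology I P) f \<and>
             (\<forall>A. openin (part_topology I P) A \<and> A \<noteq> {} \<longrightarrow> {x \<in> X. f x \<in> A} \<noteq> {})))"
proof -
  note part = assms(1)
  have ne: "\<And>i. i \<in> I \<Longrightarrow> P i \<noteq> {}" and dis: "\<And>i j. i \<in> I \<Longrightarrow> j \<in> I \<Longrightarrow> i \<noteq> j \<Longrightarrow> P i \<inter> P j = {}"
    and cov: "\<Union>(P ` I) = X"
    using part unfolding is_partition_def by auto
  have fX: "f \<in> X \<rightarrow> X" and fT: "\<And>i. i \<in> I \<Longrightarrow> \<exists>j\<in>I. f ` P i \<subseteq> P j"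
    using assms(2) unfolding TXP_def by auto
  define ch where "ch = character I P f"
  have ch: "\<And>i. i \<in> I \<Longrightarrow> ch i \<in> I \<and> f ` P i \<subseteq> P (ch i)"
  proof -
    fix i assume i: "i \<in> I"
    obtain j where j: "j \<in> I" "f ` P i \<subseteq> P j" using fT[OF i] by blast
    have uniq: "\<And>k. k \<in> I \<and> f ` P i \<subseteq> P k \<Longrightarrow> k = j"
    proof (rule ccontr)
      fix k assume k: "k \<in> I \<and> f ` P i \<subseteq> P k" "k \<noteq> j"
      obtain y where y: "y \<in> P i" using ne[OF i] by blast
      then have "f y \<in> P k" "f y \<in> P j" using k j by auto
      moreover have "P k \<inter> P j = {}" using dis[of k j] k j by simp
      ultimately show False by auto
    qed
    have "(THE k. k \<in> I \<and> f ` P i \<subseteq> P k) = j"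
    proof (rule the_equality)
      show "j \<in> I \<and> f ` P i \<subseteq> P j" using j by simp
    next
      fix k assume "k \<in> I \<and> f ` P i \<subseteq> P k"
      then show "k = j" by (rule uniq)
    qed
    then have "ch i = j" unfolding ch_def character_def .
    then show "ch i \<in> I \<and> f ` P i \<subseteq> P (ch i)" using j by simp
  qed
  have key: "\<And>i j x. i \<in> I \<Longrightarrow> j \<in> I \<Longrightarrow> x \<in> P i \<Longrightarrow> f x \<in> P j \<Longrightarrow> ch i = j"
  proof (rule ccontr)
    fix i j x assume a: "i \<in> I" "j \<in> I" "x \<in> P i" "f x \<in> P j" "ch i \<noteq> j"
    have "f x \<in> P (ch i)" using ch[OF a(1)] a(3) by blast
    moreover have "P (ch i) \<inter> P j = {}" using dis[of "ch i" j] ch[OF a(1)] a by blast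
    ultimately show False using a(4) by blast
  qed
  have topX: "topspace (part_topology I P) = X"
    unfolding part_topology_def using cov by simp
  have basis: "\<And>j. j \<in> I \<Longrightarrow> openin (part_topology I P) (P j)"
    unfolding part_topology_def by (rule topology_generated_by_Basis) auto
  have chI: "ch ` I \<subseteq> I" using ch by blast
  have s1: "f \<in> SigmaXP X I P \<longleftrightarrow> ch ` I = I"
  proof
    assume "f \<in> SigmaXP X I P"
    then have h: "\<And>j. j \<in> I \<Longrightarrow> f ` X \<inter> P j \<noteq> {}" unfolding SigmaXP_def by auto
    show "ch ` I = I"
    proof
      show "I \<subseteq> ch ` I"
      proof
        fix j assume j: "j \<in> I"
        then obtain x where x: "x \<in> X" "f x \<in> P j" using h by blast
        then obtain i where i: "i \<in> I" "x \<in> P i" using cov by blast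
        then show "j \<in> ch ` I" using key[OF i(1) j i(2) x(2)] by blast
      qed
    qed (rule chI)
  next
    assume s: "ch ` I = I"
    show "f \<in> SigmaXP X I P" unfolding SigmaXP_def
    proof (intro CollectI conjI ballI)
      show "f \<in> TXP X I P" by (rule assms(2))
      fix j assume "j \<in> I"
      then have "j \<in> ch ` I" using s by simp
      then obtain i where i: "i \<in> I" "ch i = j" by blast
      then obtain x where x: "x \<in> P i" using ne by blast
      then have "x \<in> X" using cov i by blast
      moreover have "f x \<in> P j" using ch[OF i(1)] x i by blast
      ultimately show "f ` X \<inter> P j \<noteq> {}" by blast
    qed
  qed
  have s2: "ch ` I = I \<longleftrightarrow>
            (continuous_map (part_topology I P) (part_topology I P) f \<and>
             (\<forall>A. openin (part_topology I P) A \<and> A \<noteq> {} \<longrightarrow> {x \<in> X. f x \<in> A} \<noteq> {}))"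
  proof
    assume s: "ch ` I = I"
    show "continuous_map (part_topology I P) (part_topology I P) f \<and>
             (\<forall>A. openin (part_topology I P) A \<and> A \<noteq> {} \<longrightarrow> {x \<in> X. f x \<in> A} \<noteq> {})"
    proof (intro conjI allI impI)
      show "continuous_map (part_topology I P) (part_topology I P) f"
        unfolding continuous_map_def
      proof (intro conjI allI impI)
        show "f \<in> topspace (part_topology I P) \<rightarrow> topspace (part_topology I P)"
          using fX topX by simp
        fix U assume U: "openin (part_topology I P) U"
        have sat: "U \<subseteq> X \<and> (\<forall>j\<in>I. P j \<inter> U \<noteq> {} \<longrightarrow> P j \<subseteq> U)"
          by (rule open_saturated[OF part U])
        have eq: "{x \<in> topspace (part_topology I P). f x \<in> U} = \<Union>(P ` {i \<in> I. P (ch i) \<subseteq> U})"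
        proof
          show "{x \<in> topspace (part_topology I P). f x \<in> U} \<subseteq> \<Union>(P ` {i \<in> I. P (ch i) \<subseteq> U})"
          proof
            fix x assume "x \<in> {x \<in> topspace (part_topology I P). f x \<in> U}"
            then have x: "x \<in> X" "f x \<in> U" using topX by auto
            then obtain i where i: "i \<in> I" "x \<in> P i" using cov by blast
            then have "f x \<in> P (ch i)" "ch i \<in> I" using ch by blast+
            then have "P (ch i) \<subseteq> U" using sat x by blast
            then show "x \<in> \<Union>(P ` {i \<in> I. P (ch i) \<subseteq> U})" using i by blast
          qed
        next
          show "\<Union>(P ` {i \<in> I. P (ch i) \<subseteq> U}) \<subseteq> {x \<in> topspace (part_topology I P). f x \<in> U}"
          proof
            fix x assume "x \<in> \<Union>(P ` {i \<in> I. P (ch i) \<subseteq> U})"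
            then obtain i where i: "i \<in> I" "P (ch i) \<subseteq> U" "x \<in> P i" by blast
            have "f x \<in> P (ch i)" using ch[OF i(1)] i(3) by blast
            moreover have "x \<in> X" using cov i by blast
            ultimately show "x \<in> {x \<in> topspace (part_topology I P). f x \<in> U}" using i topX by blast
          qed
        qed
        show "openin (part_topology I P) {x \<in> topspace (part_topology I P). f x \<in> U}"
          unfolding eq using basis by (intro openin_Union) auto
      qed
    next
      fix A assume A: "openin (part_topology I P) A \<and> A \<noteq> {}"
      then have sat: "A \<subseteq> X \<and> (\<forall>j\<in>I. P j \<inter> A \<noteq> {} \<longrightarrow> P j \<subseteq> A)"
        using open_saturated[OF part] by blast
      obtain a where a: "a \<in> A" using A by blast
      then obtain j where j: "j \<in> I" "a \<in> P j" using sat cov by blast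
      then have PA: "P j \<subseteq> A" using sat a by blast
      have "j \<in> ch ` I" using s j(1) by simp
      then obtain i where i: "i \<in> I" "ch i = j" by blast
      then obtain x where x: "x \<in> P i" using ne by blast
      then have "x \<in> X" using cov i by blast
      moreover have "f x \<in> A" using ch[OF i(1)] x i PA by blast
      ultimately show "{x \<in> X. f x \<in> A} \<noteq> {}" by blast
    qed
  next
    assume h: "continuous_map (part_topology I P) (part_topology I P) f \<and>
             (\<forall>A. openin (part_topology I P) A \<and> A \<noteq> {} \<longrightarrow> {x \<in> X. f x \<in> A} \<noteq> {})"
    show "ch ` I = I"
    proof
      show "I \<subseteq> ch ` I"
      proof
        fix j assume j: "j \<in> I"
        then have "{x \<in> X. f x \<in> P j} \<noteq> {}" using h basis[OF j] ne[OF j] by blast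
        then obtain x where x: "x \<in> X" "f x \<in> P j" by blast
        then obtain i where i: "i \<in> I" "x \<in> P i" using cov by blast
        then show "j \<in> ch ` I" using key[OF i(1) j i(2) x(2)] by blast
      qed
    qed (rule chI)
  qed
  show ?thesis using s1 s2 unfolding ch_def by blast
qed

end
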